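(* Consider the storage arbitrage model and Algorithm 1 described in the context. For each period $i$, the optimal reservation $M_i^*$ produced by Algorithm 1 depends solely on those $M_j^*$ with $M_j^*<M_i^*$; that is, the exact values of the $M_j^*$ with $M_j^*\ge M_i^*$ are not needed to determine $M_i^*$.
   Context: Time-of-Use (ToU) setting: a day is divided into periods $1,\dots,n$ with electricity price $\pi_i$ in period $i$, and $\pi_n=\min_i \pi_i$. The user has random demand $X_i$ in period $i$; the $X_i$ are independent, inelastic, and $X_i$ has a continuously differentiable density $f_i$ with $f_i(x)>0$ iff $x\ge 0$. The user owns a lossless, perfectly efficient storage of capacity $C$; $r_i$ is the energy stored at the end of period $i$, $r_0=r_n=C$, the purchase in period $i$ is $u_i=r_i+X_i-r_{i-1}\ge0$, and the expected total cost is $J=\mathbb{E}\big[\sum_{i=1}^n \pi_i(r_i+X_i-r_{i-1})\big]$. A virtual-reservation policy is a sequence $M_1,\dots,M_n$ fixed in advance (possibly exceeding $C$); at the end of period $i$ the user keeps at least $N_i=\min\{M_i,C\}$ in storage, i.e. $r_i=\max\{N_i, r_{i-1}-X_i\}$, buying from the grid only when needed; the last period's reservation fully charges the storage. $J_i(M_i):=J_i(M_i\mid M_{i+1}^*,\dots,M_n^* )$ is the expected cost over periods $i+1,\dots,n$ when reserving $M_i$ at the end of period $i$ and $M_{i+1}^*,\dots,M_n^*$ afterward. Algorithm 1 computes the $M_i^*$ backward, starting from the boundary condition that the last period's reservation is $C$ and treating the capacity as large enough that the computed reservations are not truncated: given $M_{i+1}^*,\dots,M_n^*$, if $\pi_i\ge\pi_{i+1}$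 it returns $M_i^*=0$; otherwise it returns the (unique) $M_i$ solving $\pi_i=-\frac{\mathrm{d}J_i}{\mathrm{d}M_i}$, equivalently $\pi_i=\sum_{k=i+1}^n \pi_k P_k^i(M_i)$, where $P_k^i(M_i)$ is the probability that, reserving $M_i,M_{i+1}^*,\dots,M_n^*$, period $k$ is the first period after $i$ in which the user must buy energy to charge the storage. *)

theory Defs
  imports "HOL-Probability.Probability"
begin

text \<open>Storage level at the end of period i+d, when reserving m at the end of period i
  and the reservations Mv (i+1), Mv (i+2), ... afterwards (capacity large, no truncation):
  r_i = m,  r_j = max (M_j) (r_{j-1} - X_j).\<close>
fun traj :: "(nat \<Rightarrow> real) \<Rightarrow> (nat \<Rightarrow> 'a \<Rightarrow> real) \<Rightarrow> nat \<Rightarrow> real \<Rightarrow> nat \<Rightarrow> 'a \<Rightarrow> real" where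
  "traj Mv X i m 0 \<omega> = m"
| "traj Mv X i m (Suc d) \<omega> = max (Mv (i + Suc d)) (traj Mv X i m d \<omega> - X (i + Suc d) \<omega>)"

definition purchase :: "(nat \<Rightarrow> real) \<Rightarrow> (nat \<Rightarrow> 'a \<Rightarrow> real) \<Rightarrow> nat \<Rightarrow> real \<Rightarrow> nat \<Rightarrow> 'a \<Rightarrow> real" where
  "purchase Mv X i m k \<omega> =
     traj Mv X i m (k - i) \<omega> + X k \<omega> - traj Mv X i m (k - i - 1) \<omega>"

definition first_buy_prob :: "'a measure \<Rightarrow> (nat \<Rightarrow> 'a \<Rightarrow> real) \<Rightarrow> (nat \<Rightarrow> real) \<Rightarrow> nat \<Rightarrow> real \<Rightarrow> nat \<Rightarrow> real" where
  "first_buy_prob M X Mv i m k =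
     measure M {\<omega> \<in> space M. purchase Mv X i m k \<omega> > 0 \<and>
                             (\<forall>j\<in>{i<..<k}. \<not> purchase Mv X i m j \<omega> > 0)}"

text \<open>The characterisation of the output of Algorithm 1 in period i, given the later
  reservations Mv: 0 if pi_i >= pi_(i+1), otherwise the solution of
  pi_i = sum_{k=i+1}^n pi_k P_k^i(m).\<close>
definition alg1_step :: "'a measure \<Rightarrow> (nat \<Rightarrow> 'a \<Rightarrow> real) \<Rightarrow> (nat \<Rightarrow> real) \<Rightarrow> nat \<Rightarrow> nat \<Rightarrow> (nat \<Rightarrow> real) \<Rightarrow> real \<Rightarrow> bool" where
  "alg1_step M X \<pi> n i Mv m =
     (if \<pi> (Suc i) \<le> \<pi> i then m = 0
      else \<pi> i = (\<Sum>k\<in>{Suc i..n}. \<pi> k * first_buy_prob M X Mv i m k))"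

end

theory Submission
  imports Defs
begin

lemma purchase_step:
  "purchase Mv X i m (i + Suc d) \<omega> = max (Mv (i + Suc d) - traj Mv X i m d \<omega> + X (i + Suc d) \<omega>) 0"
  unfolding purchase_def by (simp add: max_def)

lemma traj_meas:
  assumes "\<forall>j. Suc i \<le> j \<and> j \<le> i + d \<longrightarrow> X j \<in> borel_measurable M"
  shows "traj Mv X i m d \<in> borel_measurable M"
  using assms
proof (induction d)
  case 0 then show ?case by simp
next
  case (Suc d)
  have "X (i + Suc d) \<in> borel_measurable M" using Suc.prems by auto
  moreover have "traj Mv X i m d \<in> borel_measurable M" using Suc by auto
  ultimately show ?case by simp
qed

lemma key:
  fixes Mv1 Mv2 :: "nat \<Rightarrow> real"
  assumes pos: "\<forall>j\<in>{Suc i..n}. X j \<omega> > 0"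
    and a1: "\<forall>j\<in>{Suc i..n}. (Mv1 j < m \<longleftrightarrow> Mv2 j < m)"
    and a2: "\<forall>j\<in>{Suc i..n}. Mv1 j < m \<longrightarrow> Mv1 j = Mv2 j"
  shows "i + d \<le> n \<Longrightarrow>
    ((\<forall>j\<in>{i<..i+d}. \<not> 0 < purchase Mv1 X i m j \<omega>) \<longleftrightarrow> (\<forall>j\<in>{i<..i+d}. \<not> 0 < purchase Mv2 X i m j \<omega>))
    \<and> ((\<forall>j\<in>{i<..i+d}. \<not> 0 < purchase Mv1 X i m j \<omega>) \<longrightarrow>
         traj Mv1 X i m d \<omega> = traj Mv2 X i m d \<omega> \<and> traj Mv1 X i m d \<omega> \<le> m)"
proof (induction d)
  case 0 then show ?case by simp
next
  case (Suc d)
  let ?j = "i + Suc d"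
  have IH: "((\<forall>j\<in>{i<..i+d}. \<not> 0 < purchase Mv1 X i m j \<omega>) \<longleftrightarrow> (\<forall>j\<in>{i<..i+d}. \<not> 0 < purchase Mv2 X i m j \<omega>))
    \<and> ((\<forall>j\<in>{i<..i+d}. \<not> 0 < purchase Mv1 X i m j \<omega>) \<longrightarrow>
         traj Mv1 X i m d \<omega> = traj Mv2 X i m d \<omega> \<and> traj Mv1 X i m d \<omega> \<le> m)"
    by (rule Suc.IH) (use Suc.prems in simp)
  have jn: "?j \<in> {Suc i..n}" using Suc.prems by simp
  have Xp: "X ?j \<omega> > 0" using pos jn by blast
  have split: "\<And>P. (\<forall>j\<in>{i<..i+Suc d}. P j) \<longleftrightarrow> (\<forall>j\<in>{i<..i+d}. P j) \<and> P ?j"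
    by (auto, metis greaterThanAtMost_iff le_Suc_eq add_Suc_right)
  show ?case
  proof (cases "\<forall>j\<in>{i<..i+d}. \<not> 0 < purchase Mv1 X i m j \<omega>")
    case False
    then show ?thesis using IH unfolding split by blast
  next
    case True
    define t where "t = traj Mv1 X i m d \<omega>"
    have t2: "traj Mv2 X i m d \<omega> = t" and tm: "t \<le> m" using IH True t_def by auto
    have e: "(0 < purchase Mv1 X i m ?j \<omega>) \<longleftrightarrow> (0 < purchase Mv2 X i m ?j \<omega>)"
      unfolding purchase_step t2 t_def[symmetric]
      using a1 a2 jn Xp tm by (smt (verit))
    have np: "traj Mv1 X i m (Suc d) \<omega> = traj Mv2 X i m (Suc d) \<omega> \<and> traj Mv1 X i m (Suc d) \<omega> \<le> m"
      if h: "\<not> 0 < purchase Mv1 X i m ?j \<omega>"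
    proof -
      have h2: "\<not> 0 < purchase Mv2 X i m ?j \<omega>" using e h by blast
      have b1: "Mv1 ?j \<le> t - X ?j \<omega>" using h unfolding purchase_step t_def[symmetric] by simp
      have b2: "Mv2 ?j \<le> t - X ?j \<omega>" using h2 unfolding purchase_step t2 by simp
      have "traj Mv1 X i m (Suc d) \<omega> = t - X ?j \<omega>" using b1 by (simp add: t_def[symmetric] max_def del: add_Suc_right) 
      moreover have "traj Mv2 X i m (Suc d) \<omega> = t - X ?j \<omega>" using b2 t2 by (simp add: max_def del: add_Suc_right)
      ultimately show ?thesis using tm Xp by simp
    qed
    show ?thesis unfolding split using True IH e np by blast
  qed
qed


lemma key2:
  fixes Mv1 Mv2 :: "nat \<Rightarrow> real"
  assumes pos: "\<forall>j\<in>{Suc i..n}. X j \<omega> > 0"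
    and a1: "\<forall>j\<in>{Suc i..n}. (Mv1 j < m \<longleftrightarrow> Mv2 j < m)"
    and a2: "\<forall>j\<in>{Suc i..n}. Mv1 j < m \<longrightarrow> Mv1 j = Mv2 j"
    and k: "k \<in> {Suc i..n}"
  shows "(0 < purchase Mv1 X i m k \<omega> \<and> (\<forall>j\<in>{i<..<k}. \<not> 0 < purchase Mv1 X i m j \<omega>))
     \<longleftrightarrow> (0 < purchase Mv2 X i m k \<omega> \<and> (\<forall>j\<in>{i<..<k}. \<not> 0 < purchase Mv2 X i m j \<omega>))"
proof -
  obtain d where kd: "k = i + Suc d" using k by (metis atLeastAtMost_iff add_Suc_right less_eq_Suc_le less_imp_Suc_add)
  have iv: "{i<..<k} = {i<..i+d}" using kd by auto
  have K: "((\<forall>j\<in>{i<..i+d}. \<not> 0 < purchase Mv1 X i m j \<omega>) \<longleftrightarrow> (\<forall>j\<in>{i<..i+d}. \<not> 0 < purchase Mv2 X i m j \<omega>))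
    \<and> ((\<forall>j\<in>{i<..i+d}. \<not> 0 < purchase Mv1 X i m j \<omega>) \<longrightarrow>
         traj Mv1 X i m d \<omega> = traj Mv2 X i m d \<omega> \<and> traj Mv1 X i m d \<omega> \<le> m)"
    by (rule key[where d=d and n=n and X=X and i=i and \<omega>=\<omega> and m=m, OF pos a1 a2]) (use k kd in simp)
  show ?thesis
  proof (cases "\<forall>j\<in>{i<..i+d}. \<not> 0 < purchase Mv1 X i m j \<omega>")
    case False then show ?thesis using K iv by blast
  next
    case True
    define t where "t = traj Mv1 X i m d \<omega>"
    have t2: "traj Mv2 X i m d \<omega> = t" and tm: "t \<le> m" using K True t_def by auto
    have Xp: "X k \<omega> > 0" using pos k by blast
    have e: "(0 < purchase Mv1 X i m k \<omega>) \<longleftrightarrow> (0 < purchase Mv2 X i m k \<omega>)"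
      unfolding kd purchase_step t2 t_def[symmetric]
      using a1 a2 k kd Xp tm by (smt (verit))
    show ?thesis using e K iv True by blast
  qed
qed

lemma purchase_meas:
  assumes "\<forall>j\<in>{1..n}. X j \<in> borel_measurable M" and "1 \<le> i" and "k \<in> {Suc i..n}"
  shows "(\<lambda>\<omega>. purchase Mv X i m k \<omega>) \<in> borel_measurable M"
proof -
  have a: "traj Mv X i m (k - i) \<in> borel_measurable M"
    by (rule traj_meas) (use assms in auto)
  have b: "traj Mv X i m (k - i - 1) \<in> borel_measurable M"
    by (rule traj_meas) (use assms in auto)
  have c: "X k \<in> borel_measurable M" using assms by auto
  show ?thesis unfolding purchase_def using a b c by measurable
qed

lemma event_sets:
  assumes "\<forall>j\<in>{1..n}. X j \<in> borel_measurable M" and "1 \<le> i" and "k \<in> {Suc i..n}"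
  shows "{\<omega> \<in> space M. 0 < purchase Mv X i m k \<omega> \<and> (\<forall>j\<in>{i<..<k}. \<not> 0 < purchase Mv X i m j \<omega>)} \<in> sets M"
proof -
  have "Measurable.pred M (\<lambda>\<omega>. 0 < purchase Mv X i m k \<omega> \<and> (\<forall>j\<in>{i<..<k}. \<not> 0 < purchase Mv X i m j \<omega>))"
  proof (intro pred_intros_logic pred_intros_finite)
    show "Measurable.pred M (\<lambda>\<omega>. 0 < purchase Mv X i m k \<omega>)"
      unfolding pred_def using purchase_meas[OF assms] by measurable
    show "finite {i<..<k}" by simp
    fix j assume "j \<in> {i<..<k}"
    then have "j \<in> {Suc i..n}" using assms by auto
    then show "Measurable.pred M (\<lambda>\<omega>. 0 < purchase Mv X i m j \<omega>)"
      unfolding pred_def using purchase_meas[OF assms(1,2)] by measurable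
  qed
  then show ?thesis unfolding pred_def .
qed

theorem lemma3:
  fixes M :: "'a measure" and X :: "nat \<Rightarrow> 'a \<Rightarrow> real" and f :: "nat \<Rightarrow> real \<Rightarrow> real"
    and \<pi> :: "nat \<Rightarrow> real" and n i :: nat and C m :: real and Mv1 Mv2 :: "nat \<Rightarrow> real"
  assumes "prob_space M"
    and "\<forall>k\<in>{1..n}. \<pi> n \<le> \<pi> k"
    and "prob_space.indep_vars M (\<lambda>_. borel) X {1..n}"
    and "\<forall>k\<in>{1..n}. distributed M lborel (X k) (\<lambda>x. ennreal (f k x))"
    and "\<forall>k\<in>{1..n}. \<forall>x. f k x > 0 \<longleftrightarrow> x \<ge> 0"
    and "\<forall>k\<in>{1..n}. \<exists>f'. (\<forall>x\<ge>0. (f k has_real_derivative f' x) (at x within {0..}))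
                          \<and> continuous_on {0..} f'"
    and "C \<ge> 0"
    and "1 \<le> i" and "i < n"
    and "Mv1 n = C" and "Mv2 n = C"
    and "\<forall>j\<in>{Suc i..n}. (Mv1 j < m \<longleftrightarrow> Mv2 j < m)"
    and "\<forall>j\<in>{Suc i..n}. Mv1 j < m \<longrightarrow> Mv1 j = Mv2 j"
  shows "alg1_step M X \<pi> n i Mv1 m \<longleftrightarrow> alg1_step M X \<pi> n i Mv2 m"
proof -
  have dist: "\<And>k. k \<in> {1..n} \<Longrightarrow> distr M lborel (X k) = density lborel (\<lambda>x. ennreal (f k x))
      \<and> (\<lambda>x. ennreal (f k x)) \<in> borel_measurable lborel \<and> X k \<in> measurable M lborel"
    using assms(4) unfolding distributed_def by blast
  have meas: "\<forall>j\<in>{1..n}. X j \<in> borel_measurable M" using dist by simp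
  have AEk: "AE \<omega> in M. X k \<omega> > 0" if k: "k \<in> {1..n}" for k
  proof -
    have "AE x in lborel. 0 < ennreal (f k x) \<longrightarrow> x > 0"
      using AE_lborel_singleton[of "0::real"]
    proof (rule AE_mp, intro AE_I2 impI)
      fix x :: real assume "x \<noteq> 0" "0 < ennreal (f k x)"
      then have "f k x > 0" by (simp add: ennreal_less_zero_iff)
      then have "x \<ge> 0" using assms(5) k by blast
      then show "x > 0" using \<open>x \<noteq> 0\<close> by simp
    qed
    then have "AE x in density lborel (\<lambda>x. ennreal (f k x)). x > 0"
      using dist[OF k] by (subst AE_density) auto
    then have "AE x in distr M lborel (X k). x > 0" by (subst conjunct1[OF dist[OF k]])
    then show ?thesis
      by (subst (asm) AE_distr_iff) (use dist[OF k] in auto)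
  qed
  have AEall: "AE \<omega> in M. \<forall>j\<in>{Suc i..n}. X j \<omega> > 0"
    by (rule AE_finite_allI) (use AEk assms(8) in auto)
  have fb: "first_buy_prob M X Mv1 i m k = first_buy_prob M X Mv2 i m k" if k: "k \<in> {Suc i..n}" for k
    unfolding first_buy_prob_def
  proof (rule measure_eq_AE)
    show "AE \<omega> in M. (\<omega> \<in> {\<omega> \<in> space M. 0 < purchase Mv1 X i m k \<omega> \<and> (\<forall>j\<in>{i<..<k}. \<not> 0 < purchase Mv1 X i m j \<omega>)}) =
        (\<omega> \<in> {\<omega> \<in> space M. 0 < purchase Mv2 X i m k \<omega> \<and> (\<forall>j\<in>{i<..<k}. \<not> 0 < purchase Mv2 X i m j \<omega>)})"
      using AEall
    proof (rule AE_mp, intro AE_I2 impI)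
      fix \<omega> assume "\<forall>j\<in>{Suc i..n}. X j \<omega> > 0"
      from key2[where X=X and i=i and n=n and \<omega>=\<omega> and m=m and k=k, OF this assms(12,13) k] show "(\<omega> \<in> {\<omega> \<in> space M. 0 < purchase Mv1 X i m k \<omega> \<and> (\<forall>j\<in>{i<..<k}. \<not> 0 < purchase Mv1 X i m j \<omega>)}) =
        (\<omega> \<in> {\<omega> \<in> space M. 0 < purchase Mv2 X i m k \<omega> \<and> (\<forall>j\<in>{i<..<k}. \<not> 0 < purchase Mv2 X i m j \<omega>)})"
        by blast
    qed
  qed (rule event_sets[OF meas assms(8) k])+
  have "(\<Sum>k\<in>{Suc i..n}. \<pi> k * first_buy_prob M X Mv1 i m k) = (\<Sum>k\<in>{Suc i..n}. \<pi> k * first_buy_prob M X Mv2 i m k)"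
    using fb by (intro sum.cong) auto
  then show ?thesis unfolding alg1_step_def by simp
qed

end
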